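(* Let $I, J$ be completely regular Hausdorff spaces, $X, Y$ Hausdorff locally convex topological vector spaces over $\mathbb{C}$, with $X\otimes Y$ given a locally convex Hausdorff topology for which $(x,y)\mapsto x\otimes y$ is continuous. Let $V$, $W$, $U$ be Nachbin families on $I$, $J$, $I \times J$ respectively. Suppose (i) for all $(t, s) \in I \times J$, $\overline{CV_0(I, X)(t) \otimes CW_0(J, Y)(s)} = \overline{CU_{0}(I \times J, X \otimes Y)(t, s)}$, and (ii) $CV_{0}(I, X) \otimes CW_{0}(J, Y) \subset CU_{0}(I \times J, X \otimes Y)$. Then $CU_{0}(I \times J, X \otimes Y)$ is the closure of $CV_{0}(I, X) \otimes CW_{0}(J, Y)$ in the topology of $CU_{0}(I \times J, X \otimes Y)$.
   Context: A Nachbin family on $\Omega$ is a set $V$ of upper semicontinuous functions $\Omega\to\mathbb{R}_+$ such that for $v_1,v_2\in V$ there are $\lambda\ge0$, $w\in V$ with $v_1,v_2\le\lambda w$, and for each $x$ some $v\in V$ has $v(x)>0$. For a locally convex space $Z$ with seminorms $\mathfrak{A}$, $g:\Omega\to Z$ vanishes at infinity if for each $p\in\mathfrak{A}$, $\epsilon>0$ the closure of $\{x:p(g(x))\ge\epsilon\}$ is compact; $CV_0(\Omega,Z)=\{f\in C(\Omega,Z):vf\text{ vanishes at infinity }\forall v\in V\}$, topologized by seminorms $f\mapsto\sup_x v(x)p(f(x))$. For a set $\mathcal{W}$ of functions, $\mathcal{W}(s)=\{f(s):f\in\mathcal{W}\}$. For $f:I\to X$, $g:J\to Y$, $(f\otimes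 g)(t,s)=f(t)\otimes g(s)$, and $\mathcal{W}\otimes\mathcal{V}=\mathrm{span}\{f\otimes g\}$; for subsets $X_1\subset X$, $Y_1\subset Y$, $X_1\otimes Y_1=\mathrm{span}\{x\otimes y:x\in X_1,y\in Y_1\}$. *)

theory Defs
  imports "HOL-Analysis.Analysis"
begin

definition seminorm :: "(complex \<Rightarrow> 'a::ab_group_add \<Rightarrow> 'a) \<Rightarrow> ('a \<Rightarrow> real) \<Rightarrow> bool" where
  "seminorm s p \<longleftrightarrow> (\<forall>x y. p (x + y) \<le> p x + p y) \<and> (\<forall>c x. p (s c x) = cmod c * p x)"

definition locally_convex_space ::
  "(complex \<Rightarrow> 'a::ab_group_add \<Rightarrow> 'a) \<Rightarrow> ('a \<Rightarrow> real) set \<Rightarrow> bool" where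
  "locally_convex_space s A \<longleftrightarrow> vector_space s \<and> (\<forall>p\<in>A. seminorm s p)"

text \<open>The locally convex topology generated by a family of seminorms
  (subbase: all open seminorm balls; UNIV is added so the topspace is always UNIV).\<close>
definition lc_topology :: "('a::ab_group_add \<Rightarrow> real) set \<Rightarrow> 'a topology" where
  "lc_topology A = topology_generated_by
     (insert UNIV {{y. p (y - x) < e} | p x e. p \<in> A \<and> e > 0})"

definition upper_semicontinuous_on :: "'a topology \<Rightarrow> ('a \<Rightarrow> real) \<Rightarrow> bool" where
  "upper_semicontinuous_on T v \<longleftrightarrow> (\<forall>r. openin T {x \<in> topspace T. v x < r})"

definition nachbin_family :: "'a topology \<Rightarrow> ('a \<Rightarrow> real) set \<Rightarrow> bool" where
  "nachbin_family T V \<longleftrightarrow>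
     (\<forall>v\<in>V. upper_semicontinuous_on T v \<and> (\<forall>x\<in>topspace T. 0 \<le> v x)) \<and>
     (\<forall>v1\<in>V. \<forall>v2\<in>V. \<exists>l\<ge>0. \<exists>w\<in>V. \<forall>x\<in>topspace T. v1 x \<le> l * w x \<and> v2 x \<le> l * w x) \<and>
     (\<forall>x\<in>topspace T. \<exists>v\<in>V. v x > 0)"

definition vanishes_at_infinity :: "'a topology \<Rightarrow> ('z \<Rightarrow> real) set \<Rightarrow> ('a \<Rightarrow> 'z) \<Rightarrow> bool" where
  "vanishes_at_infinity T A g \<longleftrightarrow>
     (\<forall>p\<in>A. \<forall>\<epsilon>>0. compactin T (T closure_of {x \<in> topspace T. p (g x) \<ge> \<epsilon>}))"

text \<open>Functions are taken to be 0 outside topspace T (so that sets of functions are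
  determined by their values on the space).\<close>
definition CV0 :: "'a topology \<Rightarrow> ('a \<Rightarrow> real) set \<Rightarrow> (complex \<Rightarrow> 'z::ab_group_add \<Rightarrow> 'z)
    \<Rightarrow> ('z \<Rightarrow> real) set \<Rightarrow> ('a \<Rightarrow> 'z) set" where
  "CV0 T V s A = {f. continuous_map T (lc_topology A) f \<and> (\<forall>x. x \<notin> topspace T \<longrightarrow> f x = 0) \<and>
       (\<forall>v\<in>V. vanishes_at_infinity T A (\<lambda>x. s (complex_of_real (v x)) (f x)))}"

text \<open>The seminorm f |-> sup_x v(x) p(f(x)) (with sup of the empty set read as 0).\<close>
definition weighted_seminorm :: "'a topology \<Rightarrow> ('a \<Rightarrow> real) \<Rightarrow> ('z \<Rightarrow> real) \<Rightarrow> ('a \<Rightarrow> 'z) \<Rightarrow> real" where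
  "weighted_seminorm T v p f = Sup (insert 0 ((\<lambda>x. v x * p (f x)) ` topspace T))"

definition CV0_topology :: "'a topology \<Rightarrow> ('a \<Rightarrow> real) set \<Rightarrow> (complex \<Rightarrow> 'z::ab_group_add \<Rightarrow> 'z)
    \<Rightarrow> ('z \<Rightarrow> real) set \<Rightarrow> ('a \<Rightarrow> 'z) topology" where
  "CV0_topology T V s A = subtopology
     (topology_generated_by (insert UNIV
        {{g. weighted_seminorm T v p (\<lambda>x. g x - f x) < e} | v p f e. v \<in> V \<and> p \<in> A \<and> e > 0}))
     (CV0 T V s A)"

text \<open>b :: 'x => 'y => 't realises 't as the algebraic tensor product of 'x and 'y:
  b is bilinear, its range spans 't, and whenever x_1..x_n are linearly independent and
  sum_i b x_i y_i = 0 then all y_i = 0.\<close>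
definition is_tensor_product ::
  "(complex \<Rightarrow> 'x::ab_group_add \<Rightarrow> 'x) \<Rightarrow> (complex \<Rightarrow> 'y::ab_group_add \<Rightarrow> 'y)
   \<Rightarrow> (complex \<Rightarrow> 't::ab_group_add \<Rightarrow> 't) \<Rightarrow> ('x \<Rightarrow> 'y \<Rightarrow> 't) \<Rightarrow> bool" where
  "is_tensor_product sX sY sT b \<longleftrightarrow>
     (\<forall>y. Vector_Spaces.linear sX sT (\<lambda>x. b x y)) \<and> (\<forall>x. Vector_Spaces.linear sY sT (b x)) \<and>
     module.span sT {b x y | x y. True} = UNIV \<and>
     (\<forall>(n::nat) xs ys. inj_on xs {..<n} \<and> \<not> module.dependent sX (xs ` {..<n}) \<and>
        (\<Sum>i<n. b (xs i) (ys i)) = 0 \<longrightarrow> (\<forall>i<n. ys i = 0))"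

definition tensor_set :: "(complex \<Rightarrow> 't::ab_group_add \<Rightarrow> 't) \<Rightarrow> ('x \<Rightarrow> 'y \<Rightarrow> 't)
    \<Rightarrow> 'x set \<Rightarrow> 'y set \<Rightarrow> 't set" where
  "tensor_set sT b X1 Y1 = module.span sT {b x y | x y. x \<in> X1 \<and> y \<in> Y1}"

definition tensor_fun_set :: "(complex \<Rightarrow> 't::ab_group_add \<Rightarrow> 't) \<Rightarrow> ('x \<Rightarrow> 'y \<Rightarrow> 't)
    \<Rightarrow> ('i \<Rightarrow> 'x) set \<Rightarrow> ('j \<Rightarrow> 'y) set \<Rightarrow> ('i \<times> 'j \<Rightarrow> 't) set" where
  "tensor_fun_set sT b W1 V1 =
     {h. \<exists>(n::nat) c f g. (\<forall>i<n. f i \<in> W1 \<and> g i \<in> V1) \<and>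
         h = (\<lambda>(t, s). \<Sum>i<n. sT (c i) (b (f i t) (g i s)))}"

end

theory Submission
  imports Defs
begin


lemma sn_zero: assumes "module s" "seminorm s p" shows "p 0 = 0"
proof -
  interpret module s by fact
  have "p (s 0 0) = cmod 0 * p 0" using assms(2) unfolding seminorm_def by blast
  then show ?thesis by simp
qed

lemma sn_neg: assumes "module s" "seminorm s p" shows "p (- x) = p x"
proof -
  interpret module s by fact
  have "p (s (-1) x) = cmod (-1) * p x" using assms(2) unfolding seminorm_def by blast
  then show ?thesis by simp
qed

lemma sn_add: assumes "seminorm s p" shows "p (x + y) \<le> p x + p y"
  using assms unfolding seminorm_def by blast

lemma sn_nonneg: assumes "module s" "seminorm s p" shows "p x \<ge> 0"
proof -
  have "p (x + - x) \<le> p x + p (- x)" by (rule sn_add[OF assms(2)])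
  then show ?thesis using sn_zero[OF assms] sn_neg[OF assms] by simp
qed

lemma sn_real: assumes "seminorm s p" shows "p (s (complex_of_real r) x) = \<bar>r\<bar> * p x"
  using assms unfolding seminorm_def by simp

lemma sn_diff_sym: assumes "module s" "seminorm s p" shows "p (x - y) = p (y - x)"
  using sn_neg[OF assms, of "x - y"] by simp

lemma sn_tri: assumes "seminorm s p" shows "p (x - y) \<le> p (x - z) + p (z - y)"
  using sn_add[OF assms, of "x - z" "z - y"] by simp

lemma sn_sum: assumes "module s" "seminorm s p"
  shows "p (\<Sum>i\<in>A. F i) \<le> (\<Sum>i\<in>A. p (F i))"
proof (induct A rule: infinite_finite_induct)
  case (infinite A) then show ?case using sn_zero[OF assms] by simp
next
  case empty then show ?case using sn_zero[OF assms] by simp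
next
  case (insert x B)
  then show ?case using sn_add[OF assms(2), of "F x" "sum F B"] by simp
qed

lemma lc_topspace [simp]: "topspace (lc_topology A) = UNIV"
  unfolding lc_topology_def by (simp add: topology_generated_by_topspace)

lemma lc_open_ball: assumes "p \<in> A" "e > 0"
  shows "openin (lc_topology A) {y. p (y - x) < e}"
  unfolding lc_topology_def by (rule topology_generated_by_Basis) (use assms in blast)

lemma lc_open_balls: fixes m :: nat assumes "\<forall>k<m. q k \<in> A" "e > 0"
  shows "openin (lc_topology A) {y. \<forall>k<m. q k (y - x) < e}"
  using assms(1)
proof (induct m)
  case 0 then show ?case using openin_topspace[of "lc_topology A"] by simp
next
  case (Suc m)
  have eq: "{y. \<forall>k<Suc m. q k (y - x) < e} = {y. \<forall>k<m. q k (y - x) < e} \<inter> {y. q m (y - x) < e}"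
    using less_Suc_eq by auto
  show ?case unfolding eq
    by (rule openin_Int) (use Suc lc_open_ball[OF _ assms(2)] in auto)
qed

lemma lc_preimage: assumes "continuous_map T (lc_topology A) F" "p \<in> A" "e > 0"
  shows "openin T {t \<in> topspace T. p (F t - x) < e}"
  using openin_continuous_map_preimage[OF assms(1) lc_open_ball[OF assms(2,3), of x]] by simp

lemma lc_continuous_intro:
  assumes "\<And>p x e. p \<in> A \<Longrightarrow> e > 0 \<Longrightarrow> openin T {t \<in> topspace T. p (F t - x) < e}"
  shows "continuous_map T (lc_topology A) F"
  unfolding lc_topology_def
proof (rule continuous_on_generated_topo)
  fix U assume "U \<in> insert UNIV {{y. p (y - x) < e} |p x e. p \<in> A \<and> 0 < e}"
  then show "openin T (F -` U \<inter> topspace T)"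
  proof
    assume "U = UNIV" then show ?thesis by simp
  next
    assume "U \<in> {{y. p (y - x) < e} |p x e. p \<in> A \<and> 0 < e}"
    then obtain p x e where "p \<in> A" "e > 0" "U = {y. p (y - x) < e}" by blast
    moreover have "F -` {y. p (y - x) < e} \<inter> topspace T = {t \<in> topspace T. p (F t - x) < e}" by auto
    ultimately show ?thesis using assms by simp
  qed
qed auto

lemma lc_cont_scale:
  assumes ms: "module s" and sn: "\<forall>p\<in>A. seminorm s p"
    and F: "continuous_map T (lc_topology A) F" and al: "continuous_map T euclideanreal \<alpha>"
  shows "continuous_map T (lc_topology A) (\<lambda>t. s (complex_of_real (\<alpha> t)) (F t))"
proof (rule lc_continuous_intro)
  interpret module s by fact
  fix p x e assume pA: "p \<in> A" and e: "(e::real) > 0"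
  have snp: "seminorm s p" using sn pA by blast
  define G where "G = (\<lambda>t. s (complex_of_real (\<alpha> t)) (F t))"
  have "openin T {t \<in> topspace T. p (G t - x) < e}"
  proof (subst openin_subopen, intro ballI)
    fix t0 assume t0: "t0 \<in> {t \<in> topspace T. p (G t - x) < e}"
    define d where "d = e - p (G t0 - x)"
    have d: "d > 0" using t0 d_def by simp
    define P where "P = p (F t0)"
    have P: "P \<ge> 0" unfolding P_def by (rule sn_nonneg[OF ms snp])
    define a where "a = \<bar>\<alpha> t0\<bar>"
    define \<eta> where "\<eta> = min 1 (d / 2 / (P + a + 2))"
    have a0: "a \<ge> 0" unfolding a_def by simp
    have eta: "\<eta> > 0" unfolding \<eta>_def using d P a0 by simp
    have eta1: "\<eta> \<le> 1" unfolding \<eta>_def by simp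
    have etad: "\<eta> * (P + a + 2) \<le> d / 2" unfolding \<eta>_def using d P a0
      by (smt (verit) divide_pos_pos min.cobounded2 mult.commute pos_le_divide_eq)
    define N where "N = {t \<in> topspace T. \<alpha> t \<in> ball (\<alpha> t0) \<eta>} \<inter> {t \<in> topspace T. p (F t - F t0) < \<eta>}"
    have "openin T N" unfolding N_def
      by (intro openin_Int openin_continuous_map_preimage[OF al] lc_preimage[OF F pA eta]) simp
    moreover have "t0 \<in> N" unfolding N_def using t0 eta sn_zero[OF ms snp] by simp
    moreover have "N \<subseteq> {t \<in> topspace T. p (G t - x) < e}"
    proof
      fix t assume tN: "t \<in> N"
      have h1: "\<bar>\<alpha> t - \<alpha> t0\<bar> < \<eta>" using tN unfolding N_def by (simp add: dist_real_def abs_minus_commute)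
      have h2: "p (F t - F t0) < \<eta>" using tN unfolding N_def by simp
      have eqG: "G t - G t0 = s (complex_of_real (\<alpha> t - \<alpha> t0)) (F t) + s (complex_of_real (\<alpha> t0)) (F t - F t0)"
        unfolding G_def by (simp add: scale_right_diff_distrib scale_left_diff_distrib)
      have "p (G t - G t0) \<le> \<bar>\<alpha> t - \<alpha> t0\<bar> * p (F t) + a * p (F t - F t0)"
        using sn_add[OF snp, of "s (complex_of_real (\<alpha> t - \<alpha> t0)) (F t)" "s (complex_of_real (\<alpha> t0)) (F t - F t0)"]
        unfolding eqG sn_real[OF snp] a_def by simp
      moreover have "p (F t) \<le> P + \<eta>"
        using sn_add[OF snp, of "F t0" "F t - F t0"] h2 unfolding P_def by simp
      moreover have "p (F t) \<ge> 0" by (rule sn_nonneg[OF ms snp])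
      moreover have "p (F t - F t0) \<ge> 0" by (rule sn_nonneg[OF ms snp])
      ultimately have "p (G t - G t0) \<le> \<eta> * (P + \<eta>) + a * \<eta>"
        using h1 h2 a0 eta
        by (smt (verit, best) mult_mono mult_left_mono mult_right_mono)
      also have "\<dots> \<le> \<eta> * (P + a + 2)" using eta eta1 a0
        by (simp add: algebra_simps)
      also have "\<dots> \<le> d / 2" by (rule etad)
      finally have "p (G t - G t0) \<le> d / 2" .
      moreover have "p (G t - x) \<le> p (G t - G t0) + p (G t0 - x)" by (rule sn_tri[OF snp])
      ultimately show "t \<in> {t \<in> topspace T. p (G t - x) < e}"
        using tN d_def d e unfolding N_def by auto
    qed
    ultimately show "\<exists>U. openin T U \<and> t0 \<in> U \<and> U \<subseteq> {t \<in> topspace T. p (G t - x) < e}" by blast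
  qed
  then show "openin T {t \<in> topspace T. p (s (complex_of_real (\<alpha> t)) (F t) - x) < e}"
    by (simp add: G_def)
qed

lemma CV0_scale:
  assumes ms: "module s" and sn: "\<forall>p\<in>A. seminorm s p" and f: "f \<in> CV0 T V s A"
    and al: "continuous_map T euclideanreal \<alpha>" and ab: "\<forall>t\<in>topspace T. \<bar>\<alpha> t\<bar> \<le> 1"
  shows "(\<lambda>t. s (complex_of_real (\<alpha> t)) (f t)) \<in> CV0 T V s A"
proof -
  interpret module s by fact
  have fc: "continuous_map T (lc_topology A) f" and f0: "\<forall>x. x \<notin> topspace T \<longrightarrow> f x = 0"
    and fv: "\<forall>v\<in>V. vanishes_at_infinity T A (\<lambda>x. s (complex_of_real (v x)) (f x))"
    using f unfolding CV0_def by auto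
  have "vanishes_at_infinity T A (\<lambda>x. s (complex_of_real (v x)) (s (complex_of_real (\<alpha> x)) (f x)))"
    if v: "v \<in> V" for v
    unfolding vanishes_at_infinity_def
  proof (intro ballI allI impI)
    fix p and e :: real assume pA: "p \<in> A" and e: "e > 0"
    have snp: "seminorm s p" using sn pA by blast
    have K: "compactin T (T closure_of {x \<in> topspace T. p (s (complex_of_real (v x)) (f x)) \<ge> e})"
      using fv v pA e unfolding vanishes_at_infinity_def by blast
    have sub: "{x \<in> topspace T. p (s (complex_of_real (v x)) (s (complex_of_real (\<alpha> x)) (f x))) \<ge> e}
        \<subseteq> {x \<in> topspace T. p (s (complex_of_real (v x)) (f x)) \<ge> e}"
    proof (intro subsetI, clarify)
      fix x assume x: "x \<in> topspace T" and ge: "e \<le> p (s (complex_of_real (v x)) (s (complex_of_real (\<alpha> x)) (f x)))"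
      have "s (complex_of_real (v x)) (s (complex_of_real (\<alpha> x)) (f x))
          = s (complex_of_real (\<alpha> x)) (s (complex_of_real (v x)) (f x))"
        by (rule scale_left_commute)
      then have "p (s (complex_of_real (v x)) (s (complex_of_real (\<alpha> x)) (f x)))
          = \<bar>\<alpha> x\<bar> * p (s (complex_of_real (v x)) (f x))" by (simp only: sn_real[OF snp])
      moreover have "p (s (complex_of_real (v x)) (f x)) \<ge> 0" by (rule sn_nonneg[OF ms snp])
      ultimately have "p (s (complex_of_real (v x)) (s (complex_of_real (\<alpha> x)) (f x)))
          \<le> p (s (complex_of_real (v x)) (f x))"
        using ab x by (simp add: mult_left_le_one_le)
      then show "e \<le> p (s (complex_of_real (v x)) (f x))" using ge by simp
    qed
    show "compactin T (T closure_of {x \<in> topspace T. p (s (complex_of_real (v x)) (s (complex_of_real (\<alpha> x)) (f x))) \<ge> e})"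
      by (rule closed_compactin[OF K closure_of_mono[OF sub]]) simp
  qed
  then show ?thesis unfolding CV0_def using lc_cont_scale[OF ms sn fc al] f0 by simp
qed

lemma sum_lessThan_add_split:
  "(\<Sum>i<n1 + n2. F i) = (\<Sum>i<n1. F i) + (\<Sum>i<n2. F (n1 + i))"
  for F :: "nat \<Rightarrow> 'a::comm_monoid_add"
  by (induct n2) (simp_all add: add.assoc)

lemma tfs_elim: assumes "h \<in> tensor_fun_set sT b C1 C2"
  obtains n :: nat and c f g where "\<forall>i<n. f i \<in> C1 \<and> g i \<in> C2"
    "h = (\<lambda>(t, s). \<Sum>i<n. sT (c i) (b (f i t) (g i s)))"
  using assms unfolding tensor_fun_set_def mem_Collect_eq
  apply (elim exE conjE)
  apply (rule that)
   apply assumption+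
  done

lemma tfs_zero: "(\<lambda>_. 0) \<in> tensor_fun_set sT b C1 C2"
  unfolding tensor_fun_set_def
  by (rule CollectI, rule exI[of _ 0]) auto

lemma tfs_gen: assumes "module sT" "f \<in> C1" "g \<in> C2"
  shows "(\<lambda>(t, s). b (f t) (g s)) \<in> tensor_fun_set sT b C1 C2"
proof -
  interpret module sT by fact
  show ?thesis unfolding tensor_fun_set_def
    by (rule CollectI, rule exI[of _ 1], rule exI[of _ "\<lambda>_. 1"], rule exI[of _ "\<lambda>_. f"],
        rule exI[of _ "\<lambda>_. g"]) (use assms in auto)
qed

lemma tfs_add: assumes "h1 \<in> tensor_fun_set sT b C1 C2" "h2 \<in> tensor_fun_set sT b C1 C2"
  shows "(\<lambda>z. h1 z + h2 z) \<in> tensor_fun_set sT b C1 C2"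
proof -
  obtain n1 :: nat and c1 f1 g1 where 1: "\<forall>i<n1. f1 i \<in> C1 \<and> g1 i \<in> C2"
    "h1 = (\<lambda>(t, s). \<Sum>i<n1. sT (c1 i) (b (f1 i t) (g1 i s)))"
    using assms(1) by (rule tfs_elim)
  obtain n2 :: nat and c2 f2 g2 where 2: "\<forall>i<n2. f2 i \<in> C1 \<and> g2 i \<in> C2"
    "h2 = (\<lambda>(t, s). \<Sum>i<n2. sT (c2 i) (b (f2 i t) (g2 i s)))"
    using assms(2) by (rule tfs_elim)
  define c where "c i = (if i < n1 then c1 i else c2 (i - n1))" for i
  define f where "f i = (if i < n1 then f1 i else f2 (i - n1))" for i
  define g where "g i = (if i < n1 then g1 i else g2 (i - n1))" for i
  have "\<forall>i<n1 + n2. f i \<in> C1 \<and> g i \<in> C2"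
  proof (intro allI impI)
    fix i assume i: "i < n1 + n2"
    show "f i \<in> C1 \<and> g i \<in> C2"
    proof (cases "i < n1")
      case True then show ?thesis using 1(1) unfolding f_def g_def by simp
    next
      case False then have "i - n1 < n2" using i by simp
      then show ?thesis using 2(1) False unfolding f_def g_def by simp
    qed
  qed
  moreover have "(\<lambda>z. h1 z + h2 z) = (\<lambda>(t, s). \<Sum>i<n1 + n2. sT (c i) (b (f i t) (g i s)))"
  proof (rule ext, clarify)
    fix t s
    have a: "(\<Sum>i<n1. sT (c i) (b (f i t) (g i s))) = (\<Sum>i<n1. sT (c1 i) (b (f1 i t) (g1 i s)))"
      by (rule sum.cong) (simp_all add: c_def f_def g_def)
    have b: "(\<Sum>i<n2. sT (c (n1 + i)) (b (f (n1 + i) t) (g (n1 + i) s)))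
        = (\<Sum>i<n2. sT (c2 i) (b (f2 i t) (g2 i s)))"
      by (simp add: c_def f_def g_def)
    show "h1 (t, s) + h2 (t, s) = (\<Sum>i<n1 + n2. sT (c i) (b (f i t) (g i s)))"
      unfolding sum_lessThan_add_split a b 1 2 by simp
  qed
  ultimately show ?thesis unfolding tensor_fun_set_def
    by (intro CollectI exI[of _ "n1 + n2"] exI[of _ c] exI[of _ f] exI[of _ g] conjI)
qed

lemma tfs_scale: assumes "module sT" "h \<in> tensor_fun_set sT b C1 C2"
  shows "(\<lambda>z. sT a (h z)) \<in> tensor_fun_set sT b C1 C2"
proof -
  interpret module sT by fact
  obtain n :: nat and c f g where 1: "\<forall>i<n. f i \<in> C1 \<and> g i \<in> C2"
    "h = (\<lambda>(t, s). \<Sum>i<n. sT (c i) (b (f i t) (g i s)))"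
    using assms(2) by (rule tfs_elim)
  have "(\<lambda>z. sT a (h z)) = (\<lambda>(t, s). \<Sum>i<n. sT (a * c i) (b (f i t) (g i s)))"
    unfolding 1(2) by (rule ext, clarify) (simp only: case_prod_conv scale_sum_right scale_scale)
  then show ?thesis using 1(1) unfolding tensor_fun_set_def
    by (intro CollectI exI[of _ n] exI[of _ "\<lambda>i. a * c i"] exI[of _ f] exI[of _ g] conjI)
qed

lemma tfs_sum: fixes N :: nat assumes "\<forall>j<N. H j \<in> tensor_fun_set sT b C1 C2"
  shows "(\<lambda>z. \<Sum>j<N. H j z) \<in> tensor_fun_set sT b C1 C2"
  using assms
proof (induct N)
  case 0 then show ?case using tfs_zero by simp
next
  case (Suc N)
  then show ?case using tfs_add[of "\<lambda>z. \<Sum>j<N. H j z" sT b C1 C2 "H N"] by simp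
qed

lemma tfs_mult:
  assumes mT: "module sT" and tensor: "is_tensor_product sX sY sT b"
    and h: "h \<in> tensor_fun_set sT b C1 C2"
    and c1: "\<forall>f\<in>C1. (\<lambda>t. sX (complex_of_real (\<alpha> t)) (f t)) \<in> C1"
    and c2: "\<forall>g\<in>C2. (\<lambda>s. sY (complex_of_real (\<beta> s)) (g s)) \<in> C2"
  shows "(\<lambda>(t, s). sT (complex_of_real (\<alpha> t * \<beta> s)) (h (t, s))) \<in> tensor_fun_set sT b C1 C2"
proof -
  interpret module sT by fact
  have l1: "b (sX a x) y = sT a (b x y)" for a x y
    using tensor unfolding is_tensor_product_def
    by (metis module_hom.scale module_hom_iff_linear)
  have l2: "b x (sY a y) = sT a (b x y)" for a x y
    using tensor unfolding is_tensor_product_def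
    by (metis module_hom.scale module_hom_iff_linear)
  obtain n :: nat and c f g where 1: "\<forall>i<n. f i \<in> C1 \<and> g i \<in> C2"
    "h = (\<lambda>(t, s). \<Sum>i<n. sT (c i) (b (f i t) (g i s)))"
    using h by (rule tfs_elim)
  define f' where "f' i = (\<lambda>t. sX (complex_of_real (\<alpha> t)) (f i t))" for i
  define g' where "g' i = (\<lambda>s. sY (complex_of_real (\<beta> s)) (g i s))" for i
  have "\<forall>i<n. f' i \<in> C1 \<and> g' i \<in> C2" using 1 c1 c2 unfolding f'_def g'_def by auto
  moreover have "(\<lambda>(t, s). sT (complex_of_real (\<alpha> t * \<beta> s)) (h (t, s)))
      = (\<lambda>(t, s). \<Sum>i<n. sT (c i) (b (f' i t) (g' i s)))"
  proof (rule ext, clarify)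
    fix t s
    show "sT (complex_of_real (\<alpha> t * \<beta> s)) (h (t, s)) = (\<Sum>i<n. sT (c i) (b (f' i t) (g' i s)))"
      unfolding 1 f'_def g'_def l1 l2 scale_sum_right scale_scale case_prod_conv
      by (intro sum.cong refl) (simp add: mult_ac)
  qed
  ultimately show ?thesis unfolding tensor_fun_set_def
    by (intro CollectI exI[of _ n] exI[of _ c] exI[of _ f'] exI[of _ g'] conjI)
qed



lemma openin_finite_all: assumes "finite L" "\<forall>k\<in>L. openin X {x \<in> topspace X. P k x}"
  shows "openin X {x \<in> topspace X. \<forall>k\<in>L. P k x}"
  using assms
proof (induct L rule: finite_induct)
  case empty then show ?case by simp
next
  case (insert a L)
  have eq: "{x \<in> topspace X. \<forall>k\<in>insert a L. P k x} = {x \<in> topspace X. P a x} \<inter> {x \<in> topspace X. \<forall>k\<in>L. P k x}"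
    by auto
  show ?case unfolding eq using insert by (intro openin_Int) auto
qed

lemma lc_open_balls_fin: assumes "finite L" "\<forall>k\<in>L. q k \<in> A" "e > 0"
  shows "openin (lc_topology A) {y. \<forall>k\<in>L. q k (y - x) < e}"
proof -
  have "\<forall>k\<in>L. openin (lc_topology A) {y \<in> topspace (lc_topology A). q k (y - x) < e}"
    using assms(2) by (auto intro: lc_open_ball[OF _ assms(3)])
  from openin_finite_all[OF assms(1) this] show ?thesis by simp
qed

lemma cr_bump:
  assumes X: "completely_regular_space X" and A: "openin X A" and x: "x \<in> A"
  shows "\<exists>\<alpha> A'. continuous_map X euclideanreal \<alpha> \<and> (\<forall>t\<in>topspace X. 0 \<le> \<alpha> t \<and> \<alpha> t \<le> 1)
     \<and> openin X A' \<and> x \<in> A' \<and> (\<forall>t\<in>A'. \<alpha> t = 1) \<and> (\<forall>t\<in>topspace X. \<alpha> t > 0 \<longrightarrow> t \<in> A)"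
proof -
  have "closedin X (topspace X - A)" using A by (simp add: closedin_diff)
  moreover have "x \<in> topspace X - (topspace X - A)" using A x openin_subset by fastforce
  ultimately obtain g :: "_ \<Rightarrow> real" where g: "continuous_map X (top_of_set {0..1}) g" "g x = 0"
    "g ` (topspace X - A) \<subseteq> {1}"
    using X unfolding completely_regular_space_def by blast
  have gc: "continuous_map X euclideanreal g" using g(1) continuous_map_in_subtopology by blast
  have gr: "\<forall>t\<in>topspace X. 0 \<le> g t \<and> g t \<le> 1"
    using continuous_map_image_subset_topspace[OF g(1)] by auto
  define \<alpha> where "\<alpha> t = min 1 (2 * (1 - g t))" for t
  define A' where "A' = {t \<in> topspace X. g t \<in> {..<1/2}}"
  have "continuous_map X euclideanreal \<alpha>" unfolding \<alpha>_def
    by (intro continuous_intros gc)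
  moreover have "\<forall>t\<in>topspace X. 0 \<le> \<alpha> t \<and> \<alpha> t \<le> 1" using gr unfolding \<alpha>_def by auto
  moreover have "openin X A'" unfolding A'_def
    by (rule openin_continuous_map_preimage[OF gc]) simp
  moreover have "x \<in> A'" unfolding A'_def using g(2) A x openin_subset by fastforce
  moreover have "\<forall>t\<in>A'. \<alpha> t = 1" unfolding A'_def \<alpha>_def by auto
  moreover have "\<forall>t\<in>topspace X. \<alpha> t > 0 \<longrightarrow> t \<in> A"
  proof (intro ballI impI)
    fix t assume t: "t \<in> topspace X" and "\<alpha> t > 0"
    then have "g t < 1" unfolding \<alpha>_def by auto
    then show "t \<in> A" using g(3) t by auto
  qed
  ultimately show ?thesis by blast
qed

lemma tensor_set_sub:
  assumes mT: "module sT"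
  shows "tensor_set sT b ((\<lambda>f. f t) ` C1) ((\<lambda>g. g s) ` C2)
    \<subseteq> (\<lambda>h. h (t, s)) ` tensor_fun_set sT b C1 C2"
  unfolding tensor_set_def
proof (rule module.span_minimal[OF mT])
  interpret module sT by fact
  show "{b x y |x y. x \<in> (\<lambda>f. f t) ` C1 \<and> y \<in> (\<lambda>g. g s) ` C2} \<subseteq> (\<lambda>h. h (t, s)) ` tensor_fun_set sT b C1 C2"
  proof clarify
    fix f g assume "f \<in> C1" "g \<in> C2"
    then have "(\<lambda>(t, s). b (f t) (g s)) \<in> tensor_fun_set sT b C1 C2" by (rule tfs_gen[OF mT])
    then show "b (f t) (g s) \<in> (\<lambda>h. h (t, s)) ` tensor_fun_set sT b C1 C2"
      by (rule rev_image_eqI) simp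
  qed
  show "subspace ((\<lambda>h. h (t, s)) ` tensor_fun_set sT b C1 C2)"
  proof (rule subspaceI)
    show "0 \<in> (\<lambda>h. h (t, s)) ` tensor_fun_set sT b C1 C2"
      by (rule rev_image_eqI[OF tfs_zero]) simp
  next
    fix x y assume "x \<in> (\<lambda>h. h (t, s)) ` tensor_fun_set sT b C1 C2" "y \<in> (\<lambda>h. h (t, s)) ` tensor_fun_set sT b C1 C2"
    then obtain h1 h2 where "h1 \<in> tensor_fun_set sT b C1 C2" "h2 \<in> tensor_fun_set sT b C1 C2"
      "x = h1 (t, s)" "y = h2 (t, s)" by blast
    then show "x + y \<in> (\<lambda>h. h (t, s)) ` tensor_fun_set sT b C1 C2"
      by (intro rev_image_eqI[OF tfs_add]) auto
  next
    fix c x assume "x \<in> (\<lambda>h. h (t, s)) ` tensor_fun_set sT b C1 C2"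
    then obtain h where "h \<in> tensor_fun_set sT b C1 C2" "x = h (t, s)" by blast
    then show "sT c x \<in> (\<lambda>h. h (t, s)) ` tensor_fun_set sT b C1 C2"
      by (intro rev_image_eqI[OF tfs_scale[OF mT]]) auto
  qed
qed

lemma Sup_unbounded_eq: fixes X Y :: "real set"
  assumes "\<not> bdd_above X" "\<not> bdd_above Y" shows "Sup X = Sup Y"
proof -
  have "\<forall>z. \<not> (\<forall>x\<in>X. x \<le> z)" "\<forall>z. \<not> (\<forall>x\<in>Y. x \<le> z)"
    using assms by (auto simp: bdd_above_def)
  then have "(\<lambda>z. \<forall>x\<in>X. x \<le> z) = (\<lambda>z. \<forall>x\<in>Y. x \<le> z)"
    by (intro ext iffI; blast)
  then show ?thesis unfolding Sup_real_def by simp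
qed

lemma ws_perturb:
  assumes ms: "module s" and snp: "seminorm s p"
    and v0: "\<forall>x\<in>topspace T. 0 \<le> v x"
    and d: "\<forall>x\<in>topspace T. v x * p (h x - f x) \<le> d" and d0: "0 \<le> d"
    and lt: "weighted_seminorm T v p (\<lambda>x. f x - g x) + d < e"
  shows "weighted_seminorm T v p (\<lambda>x. h x - g x) < e"
proof -
  define W1 where "W1 = insert 0 ((\<lambda>x. v x * p (f x - g x)) ` topspace T)"
  define W2 where "W2 = insert 0 ((\<lambda>x. v x * p (h x - g x)) ` topspace T)"
  have p1: "v x * p (h x - g x) \<le> d + v x * p (f x - g x)" if x: "x \<in> topspace T" for x
  proof -
    have "p (h x - g x) \<le> p (h x - f x) + p (f x - g x)" by (rule sn_tri[OF snp])
    then have "v x * p (h x - g x) \<le> v x * (p (h x - f x) + p (f x - g x))"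
      using v0 x by (intro mult_left_mono) auto
    then have "v x * p (h x - g x) \<le> v x * p (h x - f x) + v x * p (f x - g x)"
      by (simp add: distrib_left)
    moreover have "v x * p (h x - f x) \<le> d" using d x by blast
    ultimately show ?thesis by linarith
  qed
  have p2: "v x * p (f x - g x) \<le> d + v x * p (h x - g x)" if x: "x \<in> topspace T" for x
  proof -
    have "p (f x - g x) \<le> p (f x - h x) + p (h x - g x)" by (rule sn_tri[OF snp])
    moreover have "p (f x - h x) = p (h x - f x)" by (rule sn_diff_sym[OF ms snp])
    ultimately have "v x * p (f x - g x) \<le> v x * (p (h x - f x) + p (h x - g x))"
      using v0 x by (intro mult_left_mono) auto
    then have "v x * p (f x - g x) \<le> v x * p (h x - f x) + v x * p (h x - g x)"
      by (simp add: distrib_left)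
    moreover have "v x * p (h x - f x) \<le> d" using d x by blast
    ultimately show ?thesis by linarith
  qed
  show ?thesis
  proof (cases "bdd_above W1")
    case True
    have "Sup W2 \<le> d + Sup W1"
    proof (rule cSup_least)
      show "W2 \<noteq> {}" unfolding W2_def by simp
      fix y assume "y \<in> W2"
      then have "y = 0 \<or> y \<in> (\<lambda>x. v x * p (h x - g x)) ` topspace T" unfolding W2_def by simp
      then show "y \<le> d + Sup W1"
      proof
        assume "y = 0"
        moreover have "0 \<le> Sup W1" using True unfolding W1_def by (intro cSup_upper) auto
        ultimately show ?thesis using d0 by simp
      next
        assume "y \<in> (\<lambda>x. v x * p (h x - g x)) ` topspace T"
        then obtain x where x: "x \<in> topspace T" "y = v x * p (h x - g x)" by blast
        have "v x * p (f x - g x) \<le> Sup W1" using True x unfolding W1_def by (intro cSup_upper) auto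
        then show ?thesis using p1[OF x(1)] x(2) by simp
      qed
    qed
    then show ?thesis using lt unfolding weighted_seminorm_def W1_def W2_def by simp
  next
    case False
    have "\<not> bdd_above W2"
    proof
      assume "bdd_above W2"
      then obtain B where B: "\<forall>y\<in>W2. y \<le> B" by (auto simp: bdd_above_def)
      have "\<forall>y\<in>W1. y \<le> max B 0 + d"
      proof
        fix y assume "y \<in> W1"
        then have "y = 0 \<or> y \<in> (\<lambda>x. v x * p (f x - g x)) ` topspace T" unfolding W1_def by simp
        then show "y \<le> max B 0 + d"
        proof
          assume "y = 0" then show ?thesis using d0 by simp
        next
          assume "y \<in> (\<lambda>x. v x * p (f x - g x)) ` topspace T"
          then obtain x where x: "x \<in> topspace T" "y = v x * p (f x - g x)" by blast
          have "v x * p (h x - g x) \<le> B" using B x unfolding W2_def by auto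
          then show ?thesis using p2[OF x(1)] x(2) by simp
        qed
      qed
      then have "bdd_above W1" by (auto simp: bdd_above_def)
      then show False using False by simp
    qed
    then have "Sup W2 = Sup W1" using False by (rule Sup_unbounded_eq)
    then show ?thesis using lt d0 unfolding weighted_seminorm_def W1_def W2_def by simp
  qed
qed

lemma gen_topo_fin:
  assumes "generate_topology_on B Ob" "x \<in> Ob"
  shows "\<exists>F. finite F \<and> F \<subseteq> B \<and> x \<in> \<Inter>F \<and> \<Inter>F \<subseteq> Ob"
  using assms
proof (induct arbitrary: x rule: generate_topology_on.induct)
  case Empty then show ?case by simp
next
  case (Int a c)
  have xa: "x \<in> a" and xc: "x \<in> c" using Int.prems by auto
  obtain F1 where F1: "finite F1" "F1 \<subseteq> B" "x \<in> \<Inter>F1" "\<Inter>F1 \<subseteq> a"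
    using Int.hyps(2)[OF xa] by (elim exE conjE)
  obtain F2 where F2: "finite F2" "F2 \<subseteq> B" "x \<in> \<Inter>F2" "\<Inter>F2 \<subseteq> c"
    using Int.hyps(4)[OF xc] by (elim exE conjE)
  have "finite (F1 \<union> F2)" "F1 \<union> F2 \<subseteq> B" "x \<in> \<Inter>(F1 \<union> F2)" "\<Inter>(F1 \<union> F2) \<subseteq> a \<inter> c"
    using F1 F2 by auto
  then show ?case by (intro exI[of _ "F1 \<union> F2"] conjI)
next
  case (UN K)
  obtain k where k: "k \<in> K" "x \<in> k" using UN.prems by blast
  obtain F where F: "finite F" "F \<subseteq> B" "x \<in> \<Inter>F" "\<Inter>F \<subseteq> k"
    using UN.hyps(2)[OF k] by (elim exE conjE)
  have "\<Inter>F \<subseteq> \<Union>K" using F(4) k(1) by blast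
  then show ?case using F(1-3) by (intro exI[of _ F] conjI)
next
  case (Basis s)
  have "finite {s}" "{s} \<subseteq> B" "x \<in> \<Inter>{s}" "\<Inter>{s} \<subseteq> s" using Basis by auto
  then show ?case by (intro exI[of _ "{s}"] conjI)
qed

lemma sum_phi: fixes a :: "nat \<Rightarrow> real"
  shows "(\<Sum>j<N. a j * (\<Prod>i<j. 1 - a i)) = 1 - (\<Prod>i<N. 1 - a i)"
proof (induct N)
  case 0 then show ?case by simp
next
  case (Suc N)
  have "(\<Sum>j<Suc N. a j * (\<Prod>i<j. 1 - a i)) = (1 - (\<Prod>i<N. 1 - a i)) + a N * (\<Prod>i<N. 1 - a i)"
    using Suc by simp
  also have "\<dots> = 1 - (\<Prod>i<N. 1 - a i) * (1 - a N)" by (simp add: algebra_simps)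
  also have "\<dots> = 1 - (\<Prod>i<Suc N. 1 - a i)" by simp
  finally show ?case .
qed


lemma local_approx:
  fixes TI :: "'i topology" and TJ :: "'j topology"
    and sT :: "complex \<Rightarrow> 't::ab_group_add \<Rightarrow> 't" and ST :: "('t \<Rightarrow> real) set"
    and b :: "'x \<Rightarrow> 'y \<Rightarrow> 't"
    and U :: "('i \<times> 'j \<Rightarrow> real) set"
    and u :: "'k \<Rightarrow> 'i \<times> 'j \<Rightarrow> real" and q :: "'k \<Rightarrow> 't \<Rightarrow> real"
  assumes mT: "module sT" and snT: "\<forall>p\<in>ST. seminorm sT p"
    and I: "completely_regular_space TI" and J: "completely_regular_space TJ"
    and Uf: "nachbin_family (prod_topology TI TJ) U"
    and hyp_i: "lc_topology ST closure_of tensor_set sT b ((\<lambda>f. f t0) ` C1) ((\<lambda>g. g s0) ` C2)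
        = lc_topology ST closure_of ((\<lambda>h. h (t0, s0)) ` CV0 (prod_topology TI TJ) U sT ST)"
    and hyp_ii: "tensor_fun_set sT b C1 C2 \<subseteq> CV0 (prod_topology TI TJ) U sT ST"
    and f: "f \<in> CV0 (prod_topology TI TJ) U sT ST"
    and L: "finite L" and Lq: "\<forall>k\<in>L. u k \<in> U \<and> q k \<in> ST" and eps: "\<epsilon> > 0"
    and t0: "t0 \<in> topspace TI" and s0: "s0 \<in> topspace TJ"
  shows "\<exists>h \<alpha> \<beta> A' B'. h \<in> tensor_fun_set sT b C1 C2 \<and>
     continuous_map TI euclideanreal \<alpha> \<and> (\<forall>t\<in>topspace TI. 0 \<le> \<alpha> t \<and> \<alpha> t \<le> 1) \<and>
     continuous_map TJ euclideanreal \<beta> \<and> (\<forall>s\<in>topspace TJ. 0 \<le> \<beta> s \<and> \<beta> s \<le> 1) \<and>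
     openin TI A' \<and> openin TJ B' \<and> t0 \<in> A' \<and> s0 \<in> B' \<and> (\<forall>t\<in>A'. \<alpha> t = 1) \<and> (\<forall>s\<in>B'. \<beta> s = 1) \<and>
     (\<forall>t\<in>topspace TI. \<forall>s\<in>topspace TJ. \<alpha> t > 0 \<and> \<beta> s > 0 \<longrightarrow>
        (\<forall>k\<in>L. u k (t, s) * q k (h (t, s) - f (t, s)) \<le> \<epsilon>))"
proof -
  define P where "P = prod_topology TI TJ"
  define z where "z = (t0, s0)"
  have zP: "z \<in> topspace P" unfolding P_def z_def using t0 s0 by simp
  have u0: "\<forall>k\<in>L. \<forall>x\<in>topspace P. 0 \<le> u k x" using Uf Lq unfolding nachbin_family_def P_def by blast
  have usc: "\<forall>k\<in>L. upper_semicontinuous_on P (u k)" using Uf Lq unfolding nachbin_family_def P_def by blast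
  have snq: "\<forall>k\<in>L. seminorm sT (q k)" using snT Lq by blast
  have q0: "\<forall>k\<in>L. q k 0 = 0" using sn_zero[OF mT] snq by blast
  define M where "M = (\<Sum>k\<in>L. u k z)"
  have uM: "u k z \<le> M" if "k \<in> L" for k
    unfolding M_def using that u0 zP L by (intro member_le_sum) auto
  have M0: "M \<ge> 0" unfolding M_def using u0 zP by (intro sum_nonneg) auto
  define \<delta> where "\<delta> = \<epsilon> / (3 * (M + 1))"
  have \<delta>: "\<delta> > 0" unfolding \<delta>_def using eps M0 by simp
  have Md: "(M + 1) * (3 * \<delta>) = \<epsilon>" unfolding \<delta>_def using M0 by (simp add: field_simps)
  have "f z \<in> (\<lambda>h. h (t0, s0)) ` CV0 (prod_topology TI TJ) U sT ST" using f unfolding z_def by blast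
  then have "f z \<in> lc_topology ST closure_of tensor_set sT b ((\<lambda>f. f t0) ` C1) ((\<lambda>g. g s0) ` C2)"
    unfolding hyp_i by (intro closure_of_subset[THEN subsetD]) auto
  moreover have "openin (lc_topology ST) {y. \<forall>k\<in>L. q k (y - f z) < \<delta>}"
    using Lq \<delta> L by (intro lc_open_balls_fin) auto
  moreover have "f z \<in> {y. \<forall>k\<in>L. q k (y - f z) < \<delta>}"
    using q0 \<delta> by simp
  ultimately have "\<exists>y. y \<in> tensor_set sT b ((\<lambda>f. f t0) ` C1) ((\<lambda>g. g s0) ` C2) \<and>
      y \<in> {y. \<forall>k\<in>L. q k (y - f z) < \<delta>}"
    unfolding in_closure_of by (elim conjE allE[of _ "{y. \<forall>k\<in>L. q k (y - f z) < \<delta>}"]) blast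
  then obtain y where y: "y \<in> tensor_set sT b ((\<lambda>f. f t0) ` C1) ((\<lambda>g. g s0) ` C2)"
    "\<forall>k\<in>L. q k (y - f z) < \<delta>" by blast
  have "y \<in> (\<lambda>h. h (t0, s0)) ` tensor_fun_set sT b C1 C2"
    using tensor_set_sub[OF mT, of b t0 C1 s0 C2] y(1) by (rule subsetD)
  then obtain h where h: "h \<in> tensor_fun_set sT b C1 C2" "h z = y"
    unfolding z_def by (elim imageE) simp
  have hc: "continuous_map P (lc_topology ST) h" using h(1) hyp_ii unfolding CV0_def P_def by blast
  have fc: "continuous_map P (lc_topology ST) f" using f unfolding CV0_def P_def by blast
  define N where "N = {x \<in> topspace P. \<forall>k\<in>L. u k x < u k z + 1 \<and> q k (h x - h z) < \<delta> \<and> q k (f x - f z) < \<delta>}"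
  have "openin P N" unfolding N_def
  proof (rule openin_finite_all[OF L], intro ballI)
    fix k assume k: "k \<in> L"
    have eq: "{x \<in> topspace P. u k x < u k z + 1 \<and> q k (h x - h z) < \<delta> \<and> q k (f x - f z) < \<delta>}
      = {x \<in> topspace P. u k x < u k z + 1} \<inter> {x \<in> topspace P. q k (h x - h z) < \<delta>}
        \<inter> {x \<in> topspace P. q k (f x - f z) < \<delta>}" by auto
    have o1: "openin P {x \<in> topspace P. u k x < u k z + 1}"
      using usc k unfolding upper_semicontinuous_on_def by blast
    have qk: "q k \<in> ST" using Lq k by blast
    show "openin P {x \<in> topspace P. u k x < u k z + 1 \<and> q k (h x - h z) < \<delta> \<and> q k (f x - f z) < \<delta>}"
      unfolding eq by (intro openin_Int o1 lc_preimage[OF hc qk \<delta>] lc_preimage[OF fc qk \<delta>])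
  qed
  then have oN: "\<forall>x y. (x, y) \<in> N \<longrightarrow> (\<exists>U V. openin TI U \<and> openin TJ V \<and> x \<in> U \<and> y \<in> V \<and> U \<times> V \<subseteq> N)"
    unfolding P_def openin_prod_topology_alt .
  have "z \<in> N" unfolding N_def using zP \<delta> q0 by simp
  then have "(t0, s0) \<in> N" unfolding z_def .
  then obtain A B where AB: "openin TI A" "openin TJ B" "t0 \<in> A" "s0 \<in> B" "A \<times> B \<subseteq> N"
    using oN by meson
  obtain \<alpha> A' where \<alpha>: "continuous_map TI euclideanreal \<alpha>" "\<forall>t\<in>topspace TI. 0 \<le> \<alpha> t \<and> \<alpha> t \<le> 1"
    "openin TI A'" "t0 \<in> A'" "\<forall>t\<in>A'. \<alpha> t = 1" "\<forall>t\<in>topspace TI. \<alpha> t > 0 \<longrightarrow> t \<in> A"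
    using cr_bump[OF I AB(1,3)] by blast
  obtain \<beta> B' where \<beta>: "continuous_map TJ euclideanreal \<beta>" "\<forall>s\<in>topspace TJ. 0 \<le> \<beta> s \<and> \<beta> s \<le> 1"
    "openin TJ B'" "s0 \<in> B'" "\<forall>s\<in>B'. \<beta> s = 1" "\<forall>s\<in>topspace TJ. \<beta> s > 0 \<longrightarrow> s \<in> B"
    using cr_bump[OF J AB(2,4)] by blast
  have bound: "\<forall>k\<in>L. u k (t, s) * q k (h (t, s) - f (t, s)) \<le> \<epsilon>"
    if t: "t \<in> topspace TI" and s: "s \<in> topspace TJ" and pos: "\<alpha> t > 0 \<and> \<beta> s > 0" for t s
  proof
    fix k assume k: "k \<in> L"
    have xN: "(t, s) \<in> N" using AB(5) \<alpha>(6) \<beta>(6) t s pos by blast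
    define x where "x = (t, s)"
    have xP: "x \<in> topspace P" using xN unfolding N_def x_def by simp
    have n1: "u k x < u k z + 1" "q k (h x - h z) < \<delta>" "q k (f x - f z) < \<delta>"
      using xN k unfolding N_def x_def by auto
    have snk: "seminorm sT (q k)" using snq k by blast
    have "q k (h x - f x) \<le> q k (h x - h z) + q k (h z - f x)" by (rule sn_tri[OF snk])
    moreover have "q k (h z - f x) \<le> q k (h z - f z) + q k (f z - f x)" by (rule sn_tri[OF snk])
    moreover have "q k (f z - f x) = q k (f x - f z)" by (rule sn_diff_sym[OF mT snk])
    moreover have "q k (h z - f z) < \<delta>" using y(2) h(2) k by simp
    ultimately have qb: "q k (h x - f x) \<le> 3 * \<delta>" using n1 by linarith
    have ub: "u k x \<le> M + 1" using n1(1) uM[OF k] by simp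
    have "u k x * q k (h x - f x) \<le> (M + 1) * (3 * \<delta>)"
      using u0 k xP sn_nonneg[OF mT snk] qb ub M0 by (intro mult_mono) auto
    then show "u k (t, s) * q k (h (t, s) - f (t, s)) \<le> \<epsilon>" using Md unfolding x_def by simp
  qed
  have bound': "\<forall>t\<in>topspace TI. \<forall>s\<in>topspace TJ. \<alpha> t > 0 \<and> \<beta> s > 0 \<longrightarrow>
        (\<forall>k\<in>L. u k (t, s) * q k (h (t, s) - f (t, s)) \<le> \<epsilon>)"
    using bound by blast
  show ?thesis
    apply (rule exI[of _ h], rule exI[of _ \<alpha>], rule exI[of _ \<beta>], rule exI[of _ A'], rule exI[of _ B'])
    apply (intro conjI)
    by (fact h(1) \<alpha>(1-5) \<beta>(1-5) bound')+
qed



lemma tfs_prodmult: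
  fixes j :: nat
  assumes mT: "module sT" and tensor: "is_tensor_product sX sY sT b"
    and cl: "\<forall>i<j. (\<forall>f\<in>C1. (\<lambda>t. sX (complex_of_real (\<alpha>s i t)) (f t)) \<in> C1) \<and>
                  (\<forall>g\<in>C2. (\<lambda>s. sY (complex_of_real (\<beta>s i s)) (g s)) \<in> C2)"
    and h: "h \<in> tensor_fun_set sT b C1 C2"
  shows "(\<lambda>x. sT (complex_of_real (\<Prod>i<j. 1 - \<alpha>s i (fst x) * \<beta>s i (snd x))) (h x))
           \<in> tensor_fun_set sT b C1 C2"
  using cl h
proof (induct j arbitrary: h)
  case 0
  interpret module sT by fact
  show ?case using 0 by simp
next
  case (Suc j)
  interpret module sT by fact
  have clj: "\<forall>f\<in>C1. (\<lambda>t. sX (complex_of_real (\<alpha>s j t)) (f t)) \<in> C1"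
    "\<forall>g\<in>C2. (\<lambda>s. sY (complex_of_real (\<beta>s j s)) (g s)) \<in> C2" using Suc.prems(1) by auto
  have m: "(\<lambda>(t, s). sT (complex_of_real (\<alpha>s j t * \<beta>s j s)) (h (t, s))) \<in> tensor_fun_set sT b C1 C2"
    by (rule tfs_mult[OF mT tensor Suc.prems(2) clj])
  have m': "(\<lambda>x. sT (complex_of_real (\<alpha>s j (fst x) * \<beta>s j (snd x))) (h x)) \<in> tensor_fun_set sT b C1 C2"
    using m by (simp add: case_prod_unfold)
  define h' where "h' = (\<lambda>x. h x + sT (-1) (sT (complex_of_real (\<alpha>s j (fst x) * \<beta>s j (snd x))) (h x)))"
  have h': "h' \<in> tensor_fun_set sT b C1 C2" unfolding h'_def
    by (rule tfs_add[OF Suc.prems(2) tfs_scale[OF mT m']])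
  have IH: "(\<lambda>x. sT (complex_of_real (\<Prod>i<j. 1 - \<alpha>s i (fst x) * \<beta>s i (snd x))) (h' x)) \<in> tensor_fun_set sT b C1 C2"
    using Suc.hyps[of h'] Suc.prems(1) h' by simp
  have eq: "(\<lambda>x. sT (complex_of_real (\<Prod>i<Suc j. 1 - \<alpha>s i (fst x) * \<beta>s i (snd x))) (h x))
    = (\<lambda>x. sT (complex_of_real (\<Prod>i<j. 1 - \<alpha>s i (fst x) * \<beta>s i (snd x))) (h' x))"
  proof
    fix x
    show "sT (complex_of_real (\<Prod>i<Suc j. 1 - \<alpha>s i (fst x) * \<beta>s i (snd x))) (h x)
      = sT (complex_of_real (\<Prod>i<j. 1 - \<alpha>s i (fst x) * \<beta>s i (snd x))) (h' x)"
      unfolding h'_def by (simp add: scale_right_distrib scale_left_diff_distrib algebra_simps)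
  qed
  show ?case unfolding eq by (rule IH)
qed

lemma core_approx:
  fixes TI :: "'i topology" and TJ :: "'j topology"
    and sX :: "complex \<Rightarrow> 'x::ab_group_add \<Rightarrow> 'x" and SX :: "('x \<Rightarrow> real) set"
    and sY :: "complex \<Rightarrow> 'y::ab_group_add \<Rightarrow> 'y" and SY :: "('y \<Rightarrow> real) set"
    and sT :: "complex \<Rightarrow> 't::ab_group_add \<Rightarrow> 't" and ST :: "('t \<Rightarrow> real) set"
    and b :: "'x \<Rightarrow> 'y \<Rightarrow> 't"
    and V :: "('i \<Rightarrow> real) set" and W :: "('j \<Rightarrow> real) set" and U :: "('i \<times> 'j \<Rightarrow> real) set"
    and u :: "'k \<Rightarrow> 'i \<times> 'j \<Rightarrow> real" and q :: "'k \<Rightarrow> 't \<Rightarrow> real"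
  assumes mT: "module sT" and snT: "\<forall>p\<in>ST. seminorm sT p"
    and mX: "module sX" and snX: "\<forall>p\<in>SX. seminorm sX p"
    and mY: "module sY" and snY: "\<forall>p\<in>SY. seminorm sY p"
    and tensor: "is_tensor_product sX sY sT b"
    and I: "completely_regular_space TI" and J: "completely_regular_space TJ"
    and Uf: "nachbin_family (prod_topology TI TJ) U"
    and hyp_i: "\<And>t s. t \<in> topspace TI \<Longrightarrow> s \<in> topspace TJ \<Longrightarrow>
        lc_topology ST closure_of
          tensor_set sT b ((\<lambda>f. f t) ` CV0 TI V sX SX) ((\<lambda>g. g s) ` CV0 TJ W sY SY)
        = lc_topology ST closure_of ((\<lambda>h. h (t, s)) ` CV0 (prod_topology TI TJ) U sT ST)"
    and hyp_ii: "tensor_fun_set sT b (CV0 TI V sX SX) (CV0 TJ W sY SY)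
                   \<subseteq> CV0 (prod_topology TI TJ) U sT ST"
    and f: "f \<in> CV0 (prod_topology TI TJ) U sT ST"
    and L: "finite L" and Lq: "\<forall>k\<in>L. u k \<in> U \<and> q k \<in> ST" and eps: "\<epsilon> > 0"
  shows "\<exists>h\<in>tensor_fun_set sT b (CV0 TI V sX SX) (CV0 TJ W sY SY).
           \<forall>k\<in>L. \<forall>x\<in>topspace (prod_topology TI TJ). u k x * q k (h x - f x) \<le> \<epsilon>"
proof -
  define C1 where "C1 = CV0 TI V sX SX"
  define C2 where "C2 = CV0 TJ W sY SY"
  define TFS where "TFS = tensor_fun_set sT b C1 C2"
  define P where "P = prod_topology TI TJ"
  have u0: "\<forall>k\<in>L. \<forall>x\<in>topspace P. 0 \<le> u k x" using Uf Lq unfolding nachbin_family_def P_def by blast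
  have snq: "\<forall>k\<in>L. seminorm sT (q k)" using snT Lq by blast
  define Kk where "Kk k = P closure_of {x \<in> topspace P. q k (sT (complex_of_real (u k x)) (f x)) \<ge> \<epsilon>}" for k
  have fv: "\<forall>v\<in>U. vanishes_at_infinity P ST (\<lambda>x. sT (complex_of_real (v x)) (f x))"
    using f unfolding CV0_def P_def by blast
  have Kkc: "compactin P (Kk k)" if k: "k \<in> L" for k
  proof -
    have "vanishes_at_infinity P ST (\<lambda>x. sT (complex_of_real (u k x)) (f x))" using fv Lq k by blast
    then show ?thesis unfolding vanishes_at_infinity_def Kk_def using Lq k eps by blast
  qed
  define K where "K = \<Union>(Kk ` L)"
  have Kc: "compactin P K" unfolding K_def using L Kkc by (intro compactin_Union) auto
  have KP: "K \<subseteq> topspace P" by (rule compactin_subset_topspace[OF Kc])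
  have offK: "u k x * q k (f x) < \<epsilon>" if x: "x \<in> topspace P" "x \<notin> K" and k: "k \<in> L" for x k
  proof (rule ccontr)
    assume "\<not> u k x * q k (f x) < \<epsilon>"
    moreover have "q k (sT (complex_of_real (u k x)) (f x)) = u k x * q k (f x)"
      using sn_real[of sT "q k" "u k x" "f x"] snq k u0 x by simp
    ultimately have "x \<in> {x \<in> topspace P. q k (sT (complex_of_real (u k x)) (f x)) \<ge> \<epsilon>}" using x by simp
    then have "x \<in> Kk k" unfolding Kk_def by (rule closure_of_subset[THEN subsetD, rotated]) auto
    then show False using x k unfolding K_def by blast
  qed
  define Phi where "Phi z h \<alpha> \<beta> A' B' \<longleftrightarrow> h \<in> TFS \<and>
     continuous_map TI euclideanreal \<alpha> \<and> (\<forall>t\<in>topspace TI. 0 \<le> \<alpha> t \<and> \<alpha> t \<le> 1) \<and>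
     continuous_map TJ euclideanreal \<beta> \<and> (\<forall>s\<in>topspace TJ. 0 \<le> \<beta> s \<and> \<beta> s \<le> 1) \<and>
     openin TI A' \<and> openin TJ B' \<and> fst z \<in> A' \<and> snd z \<in> B' \<and> (\<forall>t\<in>A'. \<alpha> t = 1) \<and> (\<forall>s\<in>B'. \<beta> s = 1) \<and>
     (\<forall>t\<in>topspace TI. \<forall>s\<in>topspace TJ. \<alpha> t > 0 \<and> \<beta> s > 0 \<longrightarrow>
        (\<forall>k\<in>L. u k (t, s) * q k (h (t, s) - f (t, s)) \<le> \<epsilon>))" for z h \<alpha> \<beta> A' B'
  have loc: "\<forall>z\<in>K. \<exists>h \<alpha> \<beta> A' B'. Phi z h \<alpha> \<beta> A' B'"
  proof
    fix z assume "z \<in> K"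
    then have z: "fst z \<in> topspace TI" "snd z \<in> topspace TJ" using KP unfolding P_def by auto
    show "\<exists>h \<alpha> \<beta> A' B'. Phi z h \<alpha> \<beta> A' B'"
      unfolding Phi_def TFS_def C1_def C2_def
      by (rule local_approx[OF mT snT I J Uf hyp_i[OF z] hyp_ii f L Lq eps z])
  qed
  obtain Hf where Hf: "\<forall>z\<in>K. \<exists>\<alpha> \<beta> A' B'. Phi z (Hf z) \<alpha> \<beta> A' B'"
    using bchoice[OF loc] by (elim exE)
  obtain \<alpha>f where \<alpha>f: "\<forall>z\<in>K. \<exists>\<beta> A' B'. Phi z (Hf z) (\<alpha>f z) \<beta> A' B'"
    using bchoice[OF Hf] by (elim exE)
  obtain \<beta>f where \<beta>f: "\<forall>z\<in>K. \<exists>A' B'. Phi z (Hf z) (\<alpha>f z) (\<beta>f z) A' B'"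
    using bchoice[OF \<alpha>f] by (elim exE)
  obtain Af where Af: "\<forall>z\<in>K. \<exists>B'. Phi z (Hf z) (\<alpha>f z) (\<beta>f z) (Af z) B'"
    using bchoice[OF \<beta>f] by (elim exE)
  obtain Bf where Bf: "\<forall>z\<in>K. Phi z (Hf z) (\<alpha>f z) (\<beta>f z) (Af z) (Bf z)"
    using bchoice[OF Af] by (elim exE)
  have "\<forall>Ob\<in>(\<lambda>z. Af z \<times> Bf z) ` K. openin P Ob"
    using Bf unfolding Phi_def P_def by (auto simp: openin_prod_Times_iff)
  moreover have "K \<subseteq> \<Union>((\<lambda>z. Af z \<times> Bf z) ` K)"
  proof
    fix z assume z: "z \<in> K"
    then have "z \<in> Af z \<times> Bf z" using Bf unfolding Phi_def by (cases z) auto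
    then show "z \<in> \<Union>((\<lambda>z. Af z \<times> Bf z) ` K)" using z by blast
  qed
  ultimately obtain F where F: "finite F" "F \<subseteq> (\<lambda>z. Af z \<times> Bf z) ` K" "K \<subseteq> \<Union>F"
    using Kc unfolding compactin_def by meson
  obtain C where C: "C \<subseteq> K" "finite C" "F = (\<lambda>z. Af z \<times> Bf z) ` C"
    using finite_subset_image[OF F(1,2)] by blast
  obtain xs where xs: "set xs = C" using finite_list[OF C(2)] by blast
  define N where "N = length xs"
  define zs where "zs j = xs ! j" for j
  have zsK: "zs j \<in> K" if "j < N" for j using that C(1) xs unfolding zs_def N_def by auto
  have coverK: "\<exists>j<N. fst x \<in> Af (zs j) \<and> snd x \<in> Bf (zs j)" if xK: "x \<in> K" for x
  proof -
    obtain z where "z \<in> C" "x \<in> Af z \<times> Bf z" using xK F(3) C(3) by blast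
    moreover obtain j where "j < N" "zs j = z" using \<open>z \<in> C\<close> xs unfolding zs_def N_def
      by (auto simp: in_set_conv_nth)
    ultimately show ?thesis by (cases x) auto
  qed
  define \<alpha>s where "\<alpha>s j = \<alpha>f (zs j)" for j
  define \<beta>s where "\<beta>s j = \<beta>f (zs j)" for j
  define a where "a j x = \<alpha>s j (fst x) * \<beta>s j (snd x)" for j x
  define Pi where "Pi j x = (\<Prod>i<j. 1 - a i x)" for j x
  define \<phi> where "\<phi> j x = a j x * Pi j x" for j x
  define H where "H j = Hf (zs j)" for j
  define h where "h x = (\<Sum>j<N. sT (complex_of_real (\<phi> j x)) (H j x))" for x
  have PhiJ: "Phi (zs j) (H j) (\<alpha>s j) (\<beta>s j) (Af (zs j)) (Bf (zs j))" if "j < N" for j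
    using Bf zsK[OF that] unfolding H_def \<alpha>s_def \<beta>s_def by blast
  have cl: "(\<forall>f\<in>C1. (\<lambda>t. sX (complex_of_real (\<alpha>s i t)) (f t)) \<in> C1) \<and>
            (\<forall>g\<in>C2. (\<lambda>s. sY (complex_of_real (\<beta>s i s)) (g s)) \<in> C2)" if "i < N" for i
  proof -
    have "continuous_map TI euclideanreal (\<alpha>s i)" "\<forall>t\<in>topspace TI. \<bar>\<alpha>s i t\<bar> \<le> 1"
      "continuous_map TJ euclideanreal (\<beta>s i)" "\<forall>s\<in>topspace TJ. \<bar>\<beta>s i s\<bar> \<le> 1"
      using PhiJ[OF that] unfolding Phi_def by auto
    then show ?thesis unfolding C1_def C2_def
      using CV0_scale[OF mX snX] CV0_scale[OF mY snY] by blast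
  qed
  have hT: "h \<in> TFS"
  proof -
    have "(\<lambda>x. sT (complex_of_real (\<phi> j x)) (H j x)) \<in> TFS" if j: "j < N" for j
    proof -
      have HT: "H j \<in> TFS" using PhiJ[OF j] unfolding Phi_def by blast
      have m: "(\<lambda>(t, s). sT (complex_of_real (\<alpha>s j t * \<beta>s j s)) (H j (t, s))) \<in> TFS"
        unfolding TFS_def by (rule tfs_mult[OF mT tensor HT[unfolded TFS_def]]) (use cl[OF j] in auto)
      have m': "(\<lambda>x. sT (complex_of_real (a j x)) (H j x)) \<in> TFS"
        using m unfolding a_def by (simp add: case_prod_unfold)
      have "(\<lambda>x. sT (complex_of_real (\<Prod>i<j. 1 - \<alpha>s i (fst x) * \<beta>s i (snd x)))
                (sT (complex_of_real (a j x)) (H j x))) \<in> TFS"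
        unfolding TFS_def by (rule tfs_prodmult[OF mT tensor _ m'[unfolded TFS_def]]) (use cl j in auto)
      moreover have "(\<lambda>x. sT (complex_of_real (\<Prod>i<j. 1 - \<alpha>s i (fst x) * \<beta>s i (snd x)))
                (sT (complex_of_real (a j x)) (H j x))) = (\<lambda>x. sT (complex_of_real (\<phi> j x)) (H j x))"
        using module.scale_scale[OF mT] unfolding \<phi>_def Pi_def a_def by (simp add: mult.commute)
      ultimately show ?thesis by simp
    qed
    then show ?thesis unfolding h_def TFS_def by (intro tfs_sum) (simp add: TFS_def)
  qed
  have est: "u k x * q k (h x - f x) \<le> \<epsilon>" if k: "k \<in> L" and x: "x \<in> topspace P" for k x
  proof -
    interpret module sT by fact
    have snk: "seminorm sT (q k)" using snq k by blast
    have uk0: "0 \<le> u k x" using u0 k x by blast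
    have xI: "fst x \<in> topspace TI" and xJ: "snd x \<in> topspace TJ" using x unfolding P_def by auto
    have ab: "0 \<le> a i x \<and> a i x \<le> 1" if i: "i < N" for i
    proof -
      have "0 \<le> \<alpha>s i (fst x) \<and> \<alpha>s i (fst x) \<le> 1" "0 \<le> \<beta>s i (snd x) \<and> \<beta>s i (snd x) \<le> 1"
        using PhiJ[OF i] xI xJ unfolding Phi_def by auto
      then show ?thesis unfolding a_def by (simp add: mult_le_one)
    qed
    have Pi0: "0 \<le> Pi j x" if "j \<le> N" for j
      unfolding Pi_def using ab that by (intro prod_nonneg) auto
    have phi0: "0 \<le> \<phi> j x" if "j < N" for j
      unfolding \<phi>_def using ab[OF that] Pi0[of j] that by simp
    have sphi: "(\<Sum>j<N. \<phi> j x) = 1 - Pi N x"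
      unfolding \<phi>_def Pi_def by (rule sum_phi)
    have e1: "(\<Sum>j<N. sT (complex_of_real (\<phi> j x)) (H j x - f x))
        = h x - (\<Sum>j<N. sT (complex_of_real (\<phi> j x)) (f x))"
      unfolding h_def by (simp add: scale_right_diff_distrib sum_subtractf)
    have e2: "(\<Sum>j<N. sT (complex_of_real (\<phi> j x)) (f x)) = sT (complex_of_real (\<Sum>j<N. \<phi> j x)) (f x)"
      by (simp add: scale_sum_left)
    have e3: "sT (complex_of_real (\<Sum>j<N. \<phi> j x)) (f x) = f x - sT (complex_of_real (Pi N x)) (f x)"
      unfolding sphi by (simp add: scale_left_diff_distrib)
    define A where "A = (\<Sum>j<N. sT (complex_of_real (\<phi> j x)) (H j x - f x))"
    define B where "B = sT (complex_of_real (Pi N x)) (f x)"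
    have hx: "h x - f x = A + - B" unfolding A_def B_def e1 e2 e3 by simp
    have "q k (h x - f x) \<le> q k A + q k B"
      unfolding hx using sn_add[OF snk, of A "- B"] sn_neg[OF mT snk, of B] by simp
    moreover have "q k A \<le> (\<Sum>j<N. \<phi> j x * q k (H j x - f x))"
    proof -
      have "q k A \<le> (\<Sum>j<N. q k (sT (complex_of_real (\<phi> j x)) (H j x - f x)))"
        unfolding A_def by (rule sn_sum[OF mT snk])
      also have "\<dots> = (\<Sum>j<N. \<phi> j x * q k (H j x - f x))"
        using phi0 by (intro sum.cong refl) (simp add: sn_real[OF snk])
      finally show ?thesis .
    qed
    moreover have "q k B = Pi N x * q k (f x)" unfolding B_def using Pi0[of N] by (simp add: sn_real[OF snk])
    ultimately have qb: "q k (h x - f x) \<le> (\<Sum>j<N. \<phi> j x * q k (H j x - f x)) + Pi N x * q k (f x)"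
      by linarith
    have "u k x * q k (h x - f x) \<le> u k x * ((\<Sum>j<N. \<phi> j x * q k (H j x - f x)) + Pi N x * q k (f x))"
      using qb uk0 by (rule mult_left_mono)
    also have "\<dots> = (\<Sum>j<N. \<phi> j x * (u k x * q k (H j x - f x))) + Pi N x * (u k x * q k (f x))"
      by (simp add: algebra_simps sum_distrib_left)
    also have "\<dots> \<le> (\<Sum>j<N. \<phi> j x * \<epsilon>) + Pi N x * \<epsilon>"
    proof (rule add_mono)
      show "(\<Sum>j<N. \<phi> j x * (u k x * q k (H j x - f x))) \<le> (\<Sum>j<N. \<phi> j x * \<epsilon>)"
      proof (rule sum_mono)
        fix j assume "j \<in> {..<N}"
        then have j: "j < N" by simp
        show "\<phi> j x * (u k x * q k (H j x - f x)) \<le> \<phi> j x * \<epsilon>"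
        proof (cases "\<phi> j x = 0")
          case True then show ?thesis by simp
        next
          case False
          then have "a j x \<noteq> 0" unfolding \<phi>_def by auto
          then have ne: "\<alpha>s j (fst x) \<noteq> 0" "\<beta>s j (snd x) \<noteq> 0" unfolding a_def by auto
          have "0 \<le> \<alpha>s j (fst x)" "0 \<le> \<beta>s j (snd x)"
            using PhiJ[OF j] xI xJ unfolding Phi_def by auto
          then have pos: "\<alpha>s j (fst x) > 0 \<and> \<beta>s j (snd x) > 0" using ne by auto
          have "\<forall>t\<in>topspace TI. \<forall>s\<in>topspace TJ. \<alpha>s j t > 0 \<and> \<beta>s j s > 0 \<longrightarrow>
              (\<forall>k\<in>L. u k (t, s) * q k (H j (t, s) - f (t, s)) \<le> \<epsilon>)"
            using PhiJ[OF j] unfolding Phi_def by blast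
          then have "u k (fst x, snd x) * q k (H j (fst x, snd x) - f (fst x, snd x)) \<le> \<epsilon>"
            using xI xJ pos k by blast
          then have "u k x * q k (H j x - f x) \<le> \<epsilon>" by simp
          then show ?thesis using phi0[OF j] by (rule mult_left_mono)
        qed
      qed
    next
      show "Pi N x * (u k x * q k (f x)) \<le> Pi N x * \<epsilon>"
      proof (cases "x \<in> K")
        case True
        then obtain j where j: "j < N" "fst x \<in> Af (zs j)" "snd x \<in> Bf (zs j)" using coverK by blast
        have "\<alpha>s j (fst x) = 1" "\<beta>s j (snd x) = 1" using PhiJ[OF j(1)] j(2,3) unfolding Phi_def by auto
        then have "1 - a j x = 0" unfolding a_def by simp
        then have "Pi N x = 0" unfolding Pi_def using j(1) by (intro prod_zero) auto
        then show ?thesis by simp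
      next
        case False
        then have "u k x * q k (f x) < \<epsilon>" using offK x k by blast
        then show ?thesis using Pi0[of N] by (intro mult_left_mono) auto
      qed
    qed
    also have "\<dots> = \<epsilon> * ((\<Sum>j<N. \<phi> j x) + Pi N x)"
      by (simp add: algebra_simps sum_distrib_left)
    also have "\<dots> = \<epsilon>" unfolding sphi by simp
    finally show ?thesis .
  qed
  show ?thesis using hT est unfolding TFS_def C1_def C2_def P_def by blast
qed



theorem theorem3p24:
  fixes TI :: "'i topology" and TJ :: "'j topology"
    and sX :: "complex \<Rightarrow> 'x::ab_group_add \<Rightarrow> 'x" and SX :: "('x \<Rightarrow> real) set"
    and sY :: "complex \<Rightarrow> 'y::ab_group_add \<Rightarrow> 'y" and SY :: "('y \<Rightarrow> real) set"
    and sT :: "complex \<Rightarrow> 't::ab_group_add \<Rightarrow> 't" and ST :: "('t \<Rightarrow> real) set"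
    and b :: "'x \<Rightarrow> 'y \<Rightarrow> 't"
    and V :: "('i \<Rightarrow> real) set" and W :: "('j \<Rightarrow> real) set" and U :: "('i \<times> 'j \<Rightarrow> real) set"
  assumes I: "completely_regular_space TI" "Hausdorff_space TI"
    and J: "completely_regular_space TJ" "Hausdorff_space TJ"
    and X: "locally_convex_space sX SX" "Hausdorff_space (lc_topology SX)"
    and Y: "locally_convex_space sY SY" "Hausdorff_space (lc_topology SY)"
    and tensor: "is_tensor_product sX sY sT b"
    and XY: "locally_convex_space sT ST" "Hausdorff_space (lc_topology ST)"
    and b_cont: "continuous_map (prod_topology (lc_topology SX) (lc_topology SY)) (lc_topology ST)
                   (\<lambda>(x, y). b x y)"
    and V: "nachbin_family TI V" and W: "nachbin_family TJ W"
    and U: "nachbin_family (prod_topology TI TJ) U"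
    and hyp_i: "\<And>t s. t \<in> topspace TI \<Longrightarrow> s \<in> topspace TJ \<Longrightarrow>
        lc_topology ST closure_of
          tensor_set sT b ((\<lambda>f. f t) ` CV0 TI V sX SX) ((\<lambda>g. g s) ` CV0 TJ W sY SY)
        = lc_topology ST closure_of ((\<lambda>h. h (t, s)) ` CV0 (prod_topology TI TJ) U sT ST)"
    and hyp_ii: "tensor_fun_set sT b (CV0 TI V sX SX) (CV0 TJ W sY SY)
                   \<subseteq> CV0 (prod_topology TI TJ) U sT ST"
  shows "CV0_topology (prod_topology TI TJ) U sT ST closure_of
           tensor_fun_set sT b (CV0 TI V sX SX) (CV0 TJ W sY SY)
         = CV0 (prod_topology TI TJ) U sT ST"
proof -
  have mT: "module sT" and snT: "\<forall>p\<in>ST. seminorm sT p"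
    using XY(1) unfolding locally_convex_space_def module_iff_vector_space by auto
  have mX: "module sX" and snX: "\<forall>p\<in>SX. seminorm sX p"
    using X(1) unfolding locally_convex_space_def module_iff_vector_space by auto
  have mY: "module sY" and snY: "\<forall>p\<in>SY. seminorm sY p"
    using Y(1) unfolding locally_convex_space_def module_iff_vector_space by auto
  define P where "P = prod_topology TI TJ"
  define CU where "CU = CV0 P U sT ST"
  define TFS where "TFS = tensor_fun_set sT b (CV0 TI V sX SX) (CV0 TJ W sY SY)"
  define Sub where "Sub = {{g. weighted_seminorm P v p (\<lambda>x. g x - f x) < e} | v p f e. v \<in> U \<and> p \<in> ST \<and> e > 0}"
  define G where "G = topology_generated_by (insert UNIV Sub)"
  have CT: "CV0_topology P U sT ST = subtopology G CU"
    unfolding CV0_topology_def G_def Sub_def CU_def ..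
  have topCT: "topspace (subtopology G CU) = CU"
    unfolding G_def by simp
  have u0: "\<forall>v\<in>U. \<forall>x\<in>topspace P. 0 \<le> v x" using U unfolding nachbin_family_def P_def by blast
  have "subtopology G CU closure_of TFS = CU"
  proof (rule subset_antisym)
    show "subtopology G CU closure_of TFS \<subseteq> CU"
      using closure_of_subset_topspace[of "subtopology G CU" TFS] topCT by simp
  next
    show "CU \<subseteq> subtopology G CU closure_of TFS"
    proof
      fix f assume fCU: "f \<in> CU"
      show "f \<in> subtopology G CU closure_of TFS"
        unfolding in_closure_of
      proof (intro conjI allI impI)
        show "f \<in> topspace (subtopology G CU)" using fCU topCT by simp
        fix T assume fT: "f \<in> T \<and> openin (subtopology G CU) T"
        then obtain Ob where Ob: "openin G Ob" "T = Ob \<inter> CU" unfolding openin_subtopology by blast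
        have "generate_topology_on (insert UNIV Sub) Ob"
          using Ob(1) unfolding G_def openin_topology_generated_by_iff .
        moreover have "f \<in> Ob" using fT Ob(2) by blast
        ultimately obtain F where F: "finite F" "F \<subseteq> insert UNIV Sub" "f \<in> \<Inter>F" "\<Inter>F \<subseteq> Ob"
          using gen_topo_fin by meson
        define F' where "F' = F - {UNIV}"
        have F'fin: "finite F'" unfolding F'_def using F(1) by simp
        have F'sub: "\<forall>S\<in>F'. \<exists>v p g e. v \<in> U \<and> p \<in> ST \<and> e > 0 \<and>
            S = {h. weighted_seminorm P v p (\<lambda>x. h x - g x) < e}"
          using F(2) unfolding F'_def Sub_def by blast
        obtain vS where vS: "\<forall>S\<in>F'. \<exists>p g e. vS S \<in> U \<and> p \<in> ST \<and> e > 0 \<and>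
            S = {h. weighted_seminorm P (vS S) p (\<lambda>x. h x - g x) < e}"
          using bchoice[OF F'sub] by (elim exE)
        obtain pS where pS: "\<forall>S\<in>F'. \<exists>g e. vS S \<in> U \<and> pS S \<in> ST \<and> e > 0 \<and>
            S = {h. weighted_seminorm P (vS S) (pS S) (\<lambda>x. h x - g x) < e}"
          using bchoice[OF vS] by (elim exE)
        obtain gS where gS: "\<forall>S\<in>F'. \<exists>e. vS S \<in> U \<and> pS S \<in> ST \<and> e > 0 \<and>
            S = {h. weighted_seminorm P (vS S) (pS S) (\<lambda>x. h x - gS S x) < e}"
          using bchoice[OF pS] by (elim exE)
        obtain eS where eS: "\<forall>S\<in>F'. vS S \<in> U \<and> pS S \<in> ST \<and> eS S > 0 \<and>
            S = {h. weighted_seminorm P (vS S) (pS S) (\<lambda>x. h x - gS S x) < eS S}"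
          using bchoice[OF gS] by (elim exE)
        define rS where "rS S = eS S - weighted_seminorm P (vS S) (pS S) (\<lambda>x. f x - gS S x)" for S
        have rpos: "\<forall>S\<in>F'. rS S > 0"
        proof
          fix S assume S: "S \<in> F'"
          then have "f \<in> S" using F(3) unfolding F'_def by blast
          then show "rS S > 0" using eS S unfolding rS_def by auto
        qed
        define \<epsilon> where "\<epsilon> = (if F' = {} then 1 else Min (rS ` F') / 2)"
        have eps: "\<epsilon> > 0" unfolding \<epsilon>_def using rpos F'fin by auto
        have epsr: "\<epsilon> < rS S" if S: "S \<in> F'" for S
        proof -
          have ne: "F' \<noteq> {}" using S by blast
          have "Min (rS ` F') \<le> rS S" using F'fin S by (intro Min_le) auto
          moreover have "Min (rS ` F') > 0" using F'fin ne rpos by (subst Min_gr_iff) auto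
          ultimately show ?thesis unfolding \<epsilon>_def using ne by simp
        qed
        have Lq: "\<forall>S\<in>F'. vS S \<in> U \<and> pS S \<in> ST" using eS by blast
        obtain h where h: "h \<in> TFS"
          "\<forall>S\<in>F'. \<forall>x\<in>topspace P. vS S x * pS S (h x - f x) \<le> \<epsilon>"
          using core_approx[OF mT snT mX snX mY snY tensor I(1) J(1) U hyp_i hyp_ii fCU[unfolded CU_def P_def]
              F'fin Lq eps] unfolding TFS_def P_def by blast
        have "h \<in> S" if S: "S \<in> F" for S
        proof (cases "S = UNIV")
          case True then show ?thesis by simp
        next
          case False
          then have S': "S \<in> F'" unfolding F'_def using S by simp
          have snp: "seminorm sT (pS S)" using snT Lq S' by blast
          have "weighted_seminorm P (vS S) (pS S) (\<lambda>x. h x - gS S x) < eS S"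
          proof (rule ws_perturb[OF mT snp])
            show "\<forall>x\<in>topspace P. 0 \<le> vS S x" using u0 Lq S' by blast
            show "\<forall>x\<in>topspace P. vS S x * pS S (h x - f x) \<le> \<epsilon>" using h(2) S' by blast
            show "0 \<le> \<epsilon>" using eps by simp
            show "weighted_seminorm P (vS S) (pS S) (\<lambda>x. f x - gS S x) + \<epsilon> < eS S"
              using epsr[OF S'] unfolding rS_def by simp
          qed
          then show ?thesis using eS S' by blast
        qed
        then have "h \<in> Ob" using F(4) by blast
        moreover have "h \<in> CU" using h(1) hyp_ii unfolding TFS_def CU_def P_def by blast
        ultimately show "\<exists>y. y \<in> TFS \<and> y \<in> T" using h(1) Ob(2) by blast
      qed
    qed
  qed
  then show ?thesis unfolding CT[unfolded P_def CU_def] TFS_def P_def CU_def .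
qed


end
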